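(* Let $B\ge2$ and $K$ an integer with $1\le K\le B/2$. Let $\mathcal Y\subseteq\mathbb{R}$ be bounded with $M=\sup\mathcal Y-\inf\mathcal Y>0$, and $\mathcal X\subseteq[\inf\mathcal Y,\sup\mathcal Y]^B$. Let $$\mathcal H_{BSF}=\Big\{x\in\mathcal X\mapsto w\,e\cdot x:\ w\in\{1,\tfrac12,\ldots,\tfrac1K\},\ e\in\{0,1\}^B,\ \textstyle\sum_{i=1}^Be_i=w^{-1}\Big\}.$$ Let $S=\{(x_1,y_1),\ldots,(x_n,y_n)\}$ be drawn i.i.d. from a distribution $\mathcal D$ on $\mathcal X\times\mathcal Y$. Then for any $\delta\in(0,1)$, with probability at least $1-\delta$, for all $h\in\mathcal H_{BSF}$, $$R(h)\le\widehat R_S(h)+M^2\sqrt{\frac{K\log B+\log\frac{1}{\delta\,(K-1)!}}{2n}}.$$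
   Context: $R(h)=\mathbb{E}_{(x,y)\sim\mathcal D}[(h(x)-y)^2]$ and $\widehat R_S(h)=\frac1n\sum_{i=1}^n(h(x_i)-y_i)^2$. Each $h\in\mathcal H_{BSF}$ is the uniform average of the predictions of a subset of at most $K$ of the $B$ trees of a forest; $x$ is the vector of tree predictions and $S$ is the validation set. *)

theory Defs
  imports "HOL-Probability.Probability"
begin

text \<open>Inputs x are vectors of B tree predictions, indexed by a finite type 'b with CARD('b) = B.\<close>

definition H_BSF :: "nat \<Rightarrow> ((real^'b) \<Rightarrow> real) set" where
  "H_BSF K = {h. \<exists>w e. w \<in> {1 / real k | k. k \<in> {1..K}} \<and> (\<forall>i. e i \<in> {0, 1::real})
      \<and> (\<Sum>i\<in>UNIV. e i) = 1 / w \<and> h = (\<lambda>x. w * (\<Sum>i\<in>UNIV. e i * x $ i))}"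

definition risk :: "((real^'b) \<times> real) measure \<Rightarrow> ((real^'b) \<Rightarrow> real) \<Rightarrow> real" where
  "risk D h = (\<integral>z. (h (fst z) - snd z)^2 \<partial>D)"

definition emp_risk :: "nat \<Rightarrow> (nat \<Rightarrow> (real^'b) \<times> real) \<Rightarrow> ((real^'b) \<Rightarrow> real) \<Rightarrow> real" where
  "emp_risk n S h = (1 / real n) * (\<Sum>i<n. (h (fst (S i)) - snd (S i))^2)"

end

theory Submission
  imports Defs
begin

lemma indep_coords:
  assumes D: "prob_space D" and I: "I \<noteq> {}"
  shows "prob_space.indep_vars (PiM I (\<lambda>_. D)) (\<lambda>_. D) (\<lambda>i \<omega>. \<omega> i) I"
proof -
  interpret P: prob_space "PiM I (\<lambda>_. D)" by (rule prob_space_PiM) (use D in auto)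
  have rv: "\<And>i. i \<in> I \<Longrightarrow> P.random_variable D (\<lambda>\<omega>. \<omega> i)" by measurable
  show ?thesis
  proof (subst P.indep_vars_iff_distr_eq_PiM'[OF I rv], assumption)
    have "distr (PiM I (\<lambda>_. D)) (PiM I (\<lambda>_. D)) (\<lambda>x. \<lambda>i\<in>I. x i) = distr (PiM I (\<lambda>_. D)) (PiM I (\<lambda>_. D)) (\<lambda>x. x)"
      by (intro distr_cong) (auto simp: space_PiM PiE_def extensional_restrict)
    also have "\<dots> = PiM I (\<lambda>_. D)" by simp
    also have "\<dots> = PiM I (\<lambda>i. distr (PiM I (\<lambda>_. D)) D (\<lambda>\<omega>. \<omega> i))"
      by (intro PiM_cong refl distr_PiM_component[symmetric]) (use D in auto)
    finally show "distr (PiM I (\<lambda>_. D)) (PiM I (\<lambda>_. D)) (\<lambda>x. \<lambda>i\<in>I. x i) = PiM I (\<lambda>i. distr (PiM I (\<lambda>_. D)) D (\<lambda>\<omega>. \<omega> i))" .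
  qed
qed

lemma sum_pow_fact_aux:
  assumes "1 \<le> K" "2*K \<le> B"
  shows "(\<Sum>k=1..K. real B^k / fact k) \<le> 2 * real B^K / fact K"
  using assms
proof (induction K rule: dec_induct)
  case base then show ?case by simp
next
  case (step m)
  have "(\<Sum>k=1..Suc m. real B^k / fact k) = (\<Sum>k=1..m. real B^k / fact k) + real B^Suc m / fact (Suc m)"
    using step by simp
  also have "\<dots> \<le> 2 * real B^m / fact m + real B^Suc m / fact (Suc m)"
    using step by simp
  also have "2 * real B^m / fact m \<le> real B^Suc m / fact (Suc m)"
  proof -
    have "2 * real (Suc m) \<le> real B" using step by simp
    hence "2 * real (Suc m) * real B^m \<le> real B * real B^m" by (intro mult_right_mono) auto
    hence "2 * real (Suc m) * real B^m / fact (Suc m) \<le> real B * real B^m / fact (Suc m)"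
      by (rule divide_right_mono) simp
    moreover have "2 * real (Suc m) * real B^m / fact (Suc m) = 2 * real B^m / fact m"
      by (simp add: fact_Suc del: of_nat_Suc)
    ultimately show ?thesis by simp
  qed
  finally have "(\<Sum>k=1..Suc m. real B^k / fact k) \<le> real B^Suc m / fact (Suc m) + real B^Suc m / fact (Suc m)" by simp
  moreover have "2 * real B^Suc m / fact (Suc m) = real B^Suc m / fact (Suc m) + real B^Suc m / fact (Suc m)"
    by (simp only: mult_2 add_divide_distrib)
  ultimately show ?case by linarith
qed

lemma sum_pow_fact:
  assumes "1 \<le> K" "2*K \<le> B"
  shows "(\<Sum>k=1..K. real B^k / fact k) \<le> real B^K / fact (K - 1)"
proof (cases "K = 1")
  case True then show ?thesis by simp
next
  case False
  then obtain j where j: "K = Suc j" "j \<ge> 1" using assms by (cases K) auto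
  have "(\<Sum>k=1..K. real B^k / fact k) \<le> 2 * real B^K / fact K" by (rule sum_pow_fact_aux[OF assms])
  also have "\<dots> = (2 / real K) * (real B^K / fact (K - 1))"
    using j by (simp add: fact_Suc del: of_nat_Suc)
  also have "\<dots> \<le> 1 * (real B^K / fact (K - 1))"
    using j by (intro mult_right_mono) auto
  finally show ?thesis by simp
qed

lemma card_H:
  "finite (H_BSF K :: ((real^'b) \<Rightarrow> real) set) \<and>
   real (card (H_BSF K :: ((real^'b) \<Rightarrow> real) set)) \<le> (\<Sum>k=1..K. real (CARD('b) choose k))"
proof -
  define f :: "nat \<times> 'b set \<Rightarrow> (real^'b) \<Rightarrow> real" where
    "f = (\<lambda>(k,E) x. (1 / real k) * (\<Sum>i\<in>UNIV. (if i \<in> E then 1 else 0) * x $ i))"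
  define S where "S = (SIGMA k:{1..K}. {E. E \<subseteq> (UNIV::'b set) \<and> card E = k})"
  have sub: "H_BSF K \<subseteq> f ` S"
  proof
    fix h assume "h \<in> (H_BSF K :: ((real^'b) \<Rightarrow> real) set)"
    then obtain w e k where k: "k \<in> {1..K}" "w = 1 / real k" and e: "\<forall>i. e i \<in> {0, 1::real}"
      and se: "(\<Sum>i\<in>UNIV. e i) = 1 / w" and h: "h = (\<lambda>x. w * (\<Sum>i\<in>UNIV. e i * x $ i))"
      unfolding H_BSF_def by blast
    define E where "E = {i. e i = 1}"
    have eE: "e = (\<lambda>i. if i \<in> E then 1 else 0)" using e by (auto simp: E_def fun_eq_iff)
    have "real (card E) = real k" using se k by (simp add: eE sum.If_cases)
    hence cE: "card E = k" by simp
    have "h = f (k, E)" using h k by (simp add: f_def eE)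
    moreover have "(k, E) \<in> S" using k cE by (simp add: S_def)
    ultimately show "h \<in> f ` S" by blast
  qed
  have finS: "finite S" unfolding S_def by (intro finite_SigmaI) auto
  have "card S = (\<Sum>k=1..K. card {E. E \<subseteq> (UNIV::'b set) \<and> card E = k})"
    unfolding S_def by (subst card_SigmaI) auto
  also have "\<dots> = (\<Sum>k=1..K. CARD('b) choose k)" by (intro sum.cong refl n_subsets) simp
  finally have cS: "card S = (\<Sum>k=1..K. CARD('b) choose k)" .
  have fin: "finite (H_BSF K :: ((real^'b) \<Rightarrow> real) set)" using sub finS finite_subset by blast
  have "card (H_BSF K :: ((real^'b) \<Rightarrow> real) set) \<le> card (f ` S)" using sub finS by (intro card_mono) auto
  also have "\<dots> \<le> card S" using finS by (rule card_image_le)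
  finally have "card (H_BSF K :: ((real^'b) \<Rightarrow> real) set) \<le> (\<Sum>k=1..K. CARD('b) choose k)" using cS by simp
  hence "real (card (H_BSF K :: ((real^'b) \<Rightarrow> real) set)) \<le> real (\<Sum>k=1..K. CARD('b) choose k)" by linarith
  thus ?thesis using fin by simp
qed


lemma h_bounds:
  assumes h: "h \<in> H_BSF K" and x: "\<forall>i. x $ i \<in> {a..b}"
  shows "h x \<in> {a..(b::real)}"
proof -
  obtain w e k where k: "k \<in> {1..K}" "w = 1 / real k" and e: "\<forall>i. e i \<in> {0, 1::real}"
    and se: "(\<Sum>i\<in>UNIV. e i) = 1 / w" and hd: "h = (\<lambda>x. w * (\<Sum>i\<in>UNIV. e i * x $ i))"
    using h unfolding H_BSF_def by blast
  have e0: "e i \<ge> 0" for i using e by (metis empty_iff insert_iff order_refl zero_le_one)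
  have kp: "real k > 0" using k by auto
  have "(\<Sum>i\<in>UNIV. e i * x $ i) \<le> (\<Sum>i\<in>UNIV. e i * b)"
    using x e0 by (intro sum_mono mult_left_mono) auto
  also have "\<dots> = real k * b" using se k by (simp add: sum_distrib_right[symmetric])
  finally have u: "(\<Sum>i\<in>UNIV. e i * x $ i) \<le> real k * b" .
  have "(\<Sum>i\<in>UNIV. e i * a) \<le> (\<Sum>i\<in>UNIV. e i * x $ i)"
    using x e0 by (intro sum_mono mult_left_mono) auto
  moreover have "(\<Sum>i\<in>UNIV. e i * a) = real k * a" using se k by (simp add: sum_distrib_right[symmetric])
  ultimately have l: "real k * a \<le> (\<Sum>i\<in>UNIV. e i * x $ i)" by simp
  have "h x = (\<Sum>i\<in>UNIV. e i * x $ i) / real k" using hd k by simp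
  hence hk: "real k * h x = (\<Sum>i\<in>UNIV. e i * x $ i)" using kp by (simp add: field_simps)
  have "real k * a \<le> real k * h x" "real k * h x \<le> real k * b" using u l hk by (simp_all add: mult.commute)
  thus ?thesis using kp by (simp add: mult_le_cancel_left_pos)
qed

lemma h_cont:
  assumes h: "h \<in> H_BSF K"
  shows "(\<lambda>z. (h (fst z) - snd z)^2) \<in> borel_measurable (borel :: ((real^'b) \<times> real) measure)"
proof -
  obtain w e where hd: "h = (\<lambda>x. w * (\<Sum>i\<in>UNIV. e i * x $ i))"
    using h unfolding H_BSF_def by blast
  show ?thesis unfolding hd
    by (intro borel_measurable_continuous_onI continuous_intros)
qed


theorem theorem5:
  fixes D :: "((real^'b) \<times> real) measure"
    and X :: "(real^'b) set" and Y :: "real set"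
    and K n :: nat and \<delta> :: real
  assumes "CARD('b) \<ge> 2"
    and "1 \<le> K" and "2 * K \<le> CARD('b)"
    and "bounded Y" and "Sup Y - Inf Y > 0"
    and "X \<subseteq> {x. \<forall>i. x $ i \<in> {Inf Y .. Sup Y}}"
    and "prob_space D" and "sets D = sets borel"
    and "AE z in D. fst z \<in> X \<and> snd z \<in> Y"
    and "n > 0"
    and "0 < \<delta>" and "\<delta> < 1"
  shows "measure (PiM {..<n} (\<lambda>_. D))
           {S \<in> space (PiM {..<n} (\<lambda>_. D)). \<forall>h\<in>H_BSF K.
              risk D h \<le> emp_risk n S h + (Sup Y - Inf Y)^2 *
                sqrt ((real K * ln (real CARD('b)) + ln (1 / (\<delta> * fact (K - 1)))) / (2 * real n))}
         \<ge> 1 - \<delta>"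
proof -
  note B2 = assms(1) and K1 = assms(2) and KB = assms(3) and bY = assms(4) and Mpos = assms(5)
    and Xsub = assms(6) and D = assms(7) and sD = assms(8) and AEXY = assms(9) and n0 = assms(10)
    and d0 = assms(11) and d1 = assms(12)
  define B where "B = CARD('b)"
  define a where "a = Inf Y"
  define b where "b = Sup Y"
  define M where "M = b - a"
  define P where "P = PiM {..<n} (\<lambda>_. D)"
  define H where "H = (H_BSF K :: ((real^'b) \<Rightarrow> real) set)"
  define l where "l = (\<lambda>h (z :: (real^'b) \<times> real). (h (fst z) - snd z)^2)"
  define A where "A = real K * ln (real B) + ln (1 / (\<delta> * fact (K - 1)))"
  define t where "t = sqrt (A / (2 * real n))"
  define c where "c = M^2 * t"
  interpret D: prob_space D by (rule D)
  interpret P: prob_space P unfolding P_def by (rule prob_space_PiM) (use D in auto)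
  have Mp: "M > 0" using Mpos by (simp add: M_def a_def b_def)
  have Yne: "Y \<noteq> {}"
  proof
    assume "Y = {}"
    with AEXY have "AE z in D. False" by simp
    thus False by (simp add: D.AE_False)
  qed
  have Yab: "y \<in> {a..b}" if "y \<in> Y" for y
    using that bY Yne by (auto simp: a_def b_def intro: cInf_lower cSup_upper bounded_imp_bdd_below bounded_imp_bdd_above)
  have Q: "(\<Sum>k=1..K. real B^k / fact k) \<le> real B^K / fact (K - 1)"
    using sum_pow_fact[OF K1, of B] KB by (simp add: B_def)
  have finH: "finite H" and cH0: "real (card H) \<le> (\<Sum>k=1..K. real (B choose k))"
    using card_H[of K, where 'b='b] by (simp_all add: H_def B_def)
  have "(\<Sum>k=1..K. real (B choose k)) \<le> (\<Sum>k=1..K. real B^k / fact k)"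
  proof (intro sum_mono)
    fix k
    have "real (B choose k) * fact k \<le> real B ^ k"
      using binomial_fact_pow[of B k] by (metis of_nat_fact of_nat_le_iff of_nat_mult of_nat_power)
    thus "real (B choose k) \<le> real B^k / fact k" by (simp add: field_simps)
  qed
  with cH0 Q have cH: "real (card H) \<le> real B^K / fact (K - 1)" by linarith
  have "real B ^ 1 / fact 1 \<le> (\<Sum>k=1..K. real B^k / fact k)"
    using K1 by (intro member_le_sum) auto
  with Q have QB: "real B \<le> real B^K / fact (K - 1)" by simp
  have Bp: "real B \<ge> 2" using B2 by (simp add: B_def)
  have Aeq: "A = ln (real B^K / (\<delta> * fact (K - 1)))"
    unfolding A_def using Bp d0 by (simp add: ln_realpow[symmetric] ln_div ln_mult)
  have ge1: "real B^K / (\<delta> * fact (K - 1)) \<ge> 1"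
  proof -
    have "\<delta> * fact (K - 1) \<le> 1 * fact (K - 1)" using d1 d0 by (intro mult_right_mono) auto
    also have "\<dots> \<le> real B^K"
    proof -
      have f1: "(1::real) * fact (K-1) \<le> real B * fact (K-1)" using Bp by (intro mult_right_mono) auto
      have "real B * fact (K-1) \<le> real B^K" using QB by (simp add: field_simps)
      with f1 show ?thesis by linarith
    qed
    finally show ?thesis using d0 by (simp add: field_simps)
  qed
  have A0: "A \<ge> 0" using ge1 by (simp add: Aeq)
  have expA: "exp (- (2 * real n * t^2)) = \<delta> * fact (K - 1) / real B^K"
  proof -
    have "2 * real n * t^2 = A" using A0 n0 by (simp add: t_def)
    moreover have "exp (-A) = \<delta> * fact (K - 1) / real B^K"
      using ge1 d0 Bp by (simp add: Aeq exp_minus)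
    ultimately show ?thesis by simp
  qed
  have union_bd: "real (card H) * exp (- (2 * real n * t^2)) \<le> \<delta>"
  proof -
    have "real (card H) * exp (- (2 * real n * t^2)) \<le> real B^K / fact (K - 1) * exp (- (2 * real n * t^2))"
      using cH by (intro mult_right_mono) auto
    also have "\<dots> = \<delta>" using Bp by (simp add: expA)
    finally show ?thesis .
  qed
  have t0: "t \<ge> 0" using A0 by (simp add: t_def)
  have c0: "c \<ge> 0" using t0 by (simp add: c_def)
  define Bh where "Bh = (\<lambda>h. {\<omega> \<in> space P. \<not> (risk D h \<le> emp_risk n \<omega> h + c)})"
  have In: "{..<n} \<noteq> {}" using n0 by auto
  have bad: "Bh h \<in> sets P \<and> measure P (Bh h) \<le> exp (- (2 * real n * t^2))" if hH: "h \<in> H" for h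
  proof -
    have lmeas[measurable]: "l h \<in> borel_measurable D"
      using h_cont[of h K] hH unfolding H_def l_def
      by (subst measurable_cong_sets[OF sD refl]) simp
    have lbd: "AE z in D. l h z \<in> {0..M^2}"
      using AEXY
    proof (rule eventually_mono)
      fix z assume z: "fst z \<in> X \<and> snd z \<in> Y"
      have "\<forall>i. fst z $ i \<in> {a..b}" using z Xsub by (auto simp: a_def b_def)
      hence hz: "h (fst z) \<in> {a..b}" using h_bounds[of h K] hH by (simp add: H_def)
      have yz: "snd z \<in> {a..b}" using z Yab by auto
      have "\<bar>h (fst z) - snd z\<bar> \<le> \<bar>M\<bar>" using hz yz by (auto simp: M_def)
      hence "(h (fst z) - snd z)^2 \<le> M^2" by (simp add: abs_le_square_iff)
      thus "l h z \<in> {0..M^2}" by (simp add: l_def)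
    qed
    have comp[measurable]: "(\<lambda>\<omega>. \<omega> i) \<in> measurable P D" if "i \<in> {..<n}" for i
      using that unfolding P_def by (rule measurable_component_singleton)
    have indep: "P.indep_vars (\<lambda>_. borel) (\<lambda>i \<omega>. l h (\<omega> i)) {..<n}"
      using P.indep_vars_compose2[OF indep_coords[OF D In, folded P_def], of "\<lambda>_. l h" "\<lambda>_. borel"] lmeas
      by simp
    have AEi: "AE \<omega> in P. l h (\<omega> i) \<in> {0..M^2}" if "i \<in> {..<n}" for i
      unfolding P_def using that lbd by (intro AE_PiM_component) (auto intro: D)
    have expect: "P.expectation (\<lambda>\<omega>. l h (\<omega> i)) = risk D h" if i: "i \<in> {..<n}" for i
    proof -
      have "P.expectation (\<lambda>\<omega>. l h (\<omega> i)) = integral\<^sup>L (distr P D (\<lambda>\<omega>. \<omega> i)) (l h)"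
        using i by (intro integral_distr[symmetric] comp lmeas)
      also have "distr P D (\<lambda>\<omega>. \<omega> i) = D"
        unfolding P_def using i by (intro distr_PiM_component) (auto intro: D)
      finally show ?thesis by (simp add: risk_def l_def)
    qed
    define \<mu> where "\<mu> = (\<Sum>i<n. P.expectation (\<lambda>\<omega>. l h (\<omega> i)))"
    have \<mu>eq: "\<mu> = real n * risk D h" using expect by (simp add: \<mu>_def)
    interpret Ho: Hoeffding_ineq P "{..<n}" "\<lambda>i \<omega>. l h (\<omega> i)" "\<lambda>_. 0" "\<lambda>_. M^2" \<mu>
      by unfold_locales (use indep AEi in \<open>auto simp: \<mu>_def\<close>)
    have sumpos: "(\<Sum>i<n. (M^2 - 0)^2) > 0" using n0 Mp by simp
    have hoef: "P.prob {x\<in>space P. (\<Sum>i<n. l h (x i)) \<le> \<mu> - real n * c}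
        \<le> exp (-2 * (real n * c)^2 / (\<Sum>i<n. (M^2 - 0)^2))"
      using Ho.Hoeffding_ineq_le[of "real n * c"] c0 sumpos by simp
    have "-2 * (real n * c)^2 / (\<Sum>i<n. (M^2 - 0)^2) = - (2 * real n * t^2)"
      using n0 Mp by (simp add: c_def power2_eq_square field_simps)
    with hoef have hoef': "P.prob {x\<in>space P. (\<Sum>i<n. l h (x i)) \<le> \<mu> - real n * c}
        \<le> exp (- (2 * real n * t^2))" by simp
    have sm[measurable]: "(\<lambda>\<omega>. \<Sum>i<n. l h (\<omega> i)) \<in> borel_measurable P"
      by (intro borel_measurable_sum measurable_compose[OF comp lmeas]) 
    have Bh_eq: "Bh h = {\<omega> \<in> space P. (1 / real n) * (\<Sum>i<n. l h (\<omega> i)) + c < risk D h}"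
      by (auto simp: Bh_def emp_risk_def l_def)
    have Bsets: "Bh h \<in> sets P" unfolding Bh_eq by measurable
    have sub: "Bh h \<subseteq> {x\<in>space P. (\<Sum>i<n. l h (x i)) \<le> \<mu> - real n * c}"
    proof
      fix \<omega> assume "\<omega> \<in> Bh h"
      hence w: "\<omega> \<in> space P" "(1 / real n) * (\<Sum>i<n. l h (\<omega> i)) + c < risk D h" by (auto simp: Bh_eq)
      hence "(\<Sum>i<n. l h (\<omega> i)) + real n * c < real n * risk D h"
        using n0 by (simp add: field_simps)
      thus "\<omega> \<in> {x\<in>space P. (\<Sum>i<n. l h (x i)) \<le> \<mu> - real n * c}" using w \<mu>eq by simp
    qed
    have "measure P (Bh h) \<le> P.prob {x\<in>space P. (\<Sum>i<n. l h (x i)) \<le> \<mu> - real n * c}"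
      by (intro P.finite_measure_mono sub) measurable
    with hoef' Bsets show ?thesis by simp
  qed
  define U where "U = (\<Union>h\<in>H. Bh h)"
  have Usets: "U \<in> sets P" unfolding U_def using bad finH by (intro sets.finite_UN) auto
  have "measure P U \<le> (\<Sum>h\<in>H. measure P (Bh h))"
    unfolding U_def using bad finH by (intro P.finite_measure_subadditive_finite) auto
  also have "\<dots> \<le> real (card H) * exp (- (2 * real n * t^2))"
    using bad by (intro sum_bounded_above) auto
  also have "\<dots> \<le> \<delta>" by (rule union_bd)
  finally have Ud: "measure P U \<le> \<delta>" .
  have seteq: "{S \<in> space (PiM {..<n} (\<lambda>_. D)). \<forall>h\<in>H_BSF K.
              risk D h \<le> emp_risk n S h + (Sup Y - Inf Y)^2 *
                sqrt ((real K * ln (real CARD('b)) + ln (1 / (\<delta> * fact (K - 1)))) / (2 * real n))}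
     = space P - U"
    by (auto simp: P_def U_def Bh_def c_def t_def A_def M_def a_def b_def B_def H_def)
  have "measure P (space P - U) = 1 - measure P U" using Usets by (rule P.prob_compl)
  with Ud seteq show ?thesis by (simp add: P_def)
qed
end
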